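(* Let $(p_{ij})_{i,j\in\{0,1\}}$ be a transition matrix with all $p_{ij}\in(0,1)$ and $p_{ij}\ne\tfrac12$ for some $(i,j)$, and for $i\in\{0,1\}$, $n\in\mathbb N_0$ let $I_n^i$ be binomially $B(n,p_{i0})$ distributed. Let $(a_i(n))_{n\in\mathbb N_0}$, $(\varepsilon_i(n))_{n\in\mathbb N_0}$, $i\in\{0,1\}$, be real sequences satisfying $$a_i(n)=\mathbb E[a_0(I_n^i)]+\mathbb E[a_1(n-I_n^i)]+\varepsilon_i(n),\qquad i\in\{0,1\},\ n\in\mathbb N.$$ If $\varepsilon_i(n)=c_in+O(n^\alpha)$ for constants $c_0,c_1\in\mathbb R$, some $\alpha<1$ and both $i$, then as $n\to\infty$ $$a_i(n)=\frac{\pi_0c_0+\pi_1c_1}{H}n\log n+O(n),\qquad i\in\{0,1\}.$$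
   Context: $\pi_0=p_{10}/(p_{01}+p_{10})$, $\pi_1=p_{01}/(p_{01}+p_{10})$, $H_i=-\sum_{j}p_{ij}\log p_{ij}$, $H=\pi_0H_0+\pi_1H_1$. *)

theory Defs
  imports "HOL-Probability.Probability" "HOL-Library.Landau_Symbols"
begin

definition stat_pi :: "(nat \<Rightarrow> nat \<Rightarrow> real) \<Rightarrow> nat \<Rightarrow> real" where
  "stat_pi p i = (if i = 0 then p 1 0 / (p 0 1 + p 1 0) else p 0 1 / (p 0 1 + p 1 0))"

definition row_entropy :: "(nat \<Rightarrow> nat \<Rightarrow> real) \<Rightarrow> nat \<Rightarrow> real" where
  "row_entropy p i = - (\<Sum>j\<in>{0,1}. p i j * ln (p i j))"

definition chain_entropy :: "(nat \<Rightarrow> nat \<Rightarrow> real) \<Rightarrow> real" where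
  "chain_entropy p = stat_pi p 0 * row_entropy p 0 + stat_pi p 1 * row_entropy p 1"

end

theory Submission
  imports Defs
begin

definition w :: "nat \<Rightarrow> real \<Rightarrow> nat \<Rightarrow> real" where
  "w n q k = real (n choose k) * q ^ k * (1 - q) ^ (n - k)"

lemma w_nonneg: "0 \<le> q \<Longrightarrow> q \<le> 1 \<Longrightarrow> 0 \<le> w n q k"
  by (simp add: w_def)

lemma S0: "(\<Sum>k\<le>n. w n q k) = 1"
  using binomial_ring[of q "1 - q" n] by (simp add: w_def)

lemma shift:
  "(\<Sum>k\<le>Suc m. w (Suc m) q k * (real k * h k)) = real (Suc m) * q * (\<Sum>k\<le>m. w m q k * h (Suc k))"
proof -
  have "(\<Sum>k\<le>Suc m. w (Suc m) q k * (real k * h k)) = (\<Sum>k\<le>m. w (Suc m) q (Suc k) * (real (Suc k) * h (Suc k)))"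
    by (subst sum.atMost_Suc_shift) simp
  also have "\<dots> = (\<Sum>k\<le>m. real (Suc m) * q * (w m q k * h (Suc k)))"
  proof (rule sum.cong[OF refl])
    fix k assume "k \<in> {..m}"
    have "real (Suc m choose Suc k) * real (Suc k) = real (Suc m) * real (m choose k)"
      using Suc_times_binomial_eq[of m k] by (metis of_nat_mult)
    moreover have "w (Suc m) q (Suc k) * (real (Suc k) * h (Suc k)) = (real (Suc m choose Suc k) * real (Suc k)) * (q * (q^k * (1-q)^(m-k) * h (Suc k)))"
      by (simp add: w_def mult_ac)
    ultimately show "w (Suc m) q (Suc k) * (real (Suc k) * h (Suc k)) = real (Suc m) * q * (w m q k * h (Suc k))"
      by (simp add: w_def mult_ac)
  qed
  also have "\<dots> = real (Suc m) * q * (\<Sum>k\<le>m. w m q k * h (Suc k))"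
    by (simp add: sum_distrib_left)
  finally show ?thesis .
qed

lemma S1: "(\<Sum>k\<le>n. w n q k * real k) = real n * q"
proof (cases n)
  case 0 then show ?thesis by simp
next
  case (Suc m)
  have "(\<Sum>k\<le>n. w n q k * real k) = (\<Sum>k\<le>Suc m. w (Suc m) q k * (real k * 1))" using Suc by simp
  also have "\<dots> = real (Suc m) * q * (\<Sum>k\<le>m. w m q k * 1)" by (rule shift)
  finally show ?thesis using S0[of m q] Suc by simp
qed

lemma S2: "(\<Sum>k\<le>n. w n q k * real k ^ 2) = real n * q * ((real n - 1) * q + 1)"
proof (cases n)
  case 0 then show ?thesis by simp
next
  case (Suc m)
  have "(\<Sum>k\<le>n. w n q k * real k ^ 2) = (\<Sum>k\<le>Suc m. w (Suc m) q k * (real k * real k))" using Suc by (simp add: power2_eq_square)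
  also have "\<dots> = real (Suc m) * q * (\<Sum>k\<le>m. w m q k * real (Suc k))" by (rule shift)
  also have "(\<Sum>k\<le>m. w m q k * real (Suc k)) = (\<Sum>k\<le>m. w m q k * real k) + (\<Sum>k\<le>m. w m q k)"
    by (simp add: algebra_simps sum.distrib)
  finally show ?thesis using S0[of m q] S1[of m q] Suc by simp
qed

lemma w_rev: "(\<Sum>k\<le>n. w n q k * h (n - k)) = (\<Sum>k\<le>n. w n (1 - q) k * h k)"
proof -
  have "(\<Sum>k\<le>n. w n q k * h (n - k)) = (\<Sum>k=0..n. w n q k * h (n - k))" by (simp add: atMost_atLeast0)
  also have "\<dots> = (\<Sum>k=0..n. w n q (n - k) * h (n - (n - k)))" by (rule sum.atLeastAtMost_rev[where n=0, simplified])
  also have "\<dots> = (\<Sum>k=0..n. w n (1 - q) k * h k)"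
    by (rule sum.cong[OF refl]) (auto simp: w_def binomial_symmetric[symmetric] mult_ac)
  finally show ?thesis by (simp add: atMost_atLeast0)
qed

lemma Squad: "(\<Sum>k\<le>n. w n q k * (A + B * real k + C * real k ^ 2)) = A + B * (real n * q) + C * (real n * q * ((real n - 1) * q + 1))"
proof -
  have "(\<Sum>k\<le>n. w n q k * (A + B * real k + C * real k ^ 2)) = A * (\<Sum>k\<le>n. w n q k) + B * (\<Sum>k\<le>n. w n q k * real k) + C * (\<Sum>k\<le>n. w n q k * real k ^ 2)"
    by (simp add: algebra_simps sum.distrib sum_distrib_left)
  then show ?thesis by (simp add: S0 S1 S2)
qed

lemma wsum_mono: "0 \<le> q \<Longrightarrow> q \<le> 1 \<Longrightarrow> (\<And>k. k \<le> n \<Longrightarrow> f k \<le> g k) \<Longrightarrow> (\<Sum>k\<le>n. w n q k * f k) \<le> (\<Sum>k\<le>n. w n q k * g k)"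
  by (intro sum_mono mult_left_mono) (auto simp: w_nonneg)

lemma xlnx_lower: fixes x m :: real assumes "0 \<le> x" "0 < m" shows "x * ln m + x - m \<le> x * ln x"
proof (cases "x = 0")
  case False
  then have x: "0 < x" using False assms by (simp add: order_le_less)
  have "ln (m / x) \<le> m / x - 1" using x \<open>0 < m\<close> by (intro ln_le_minus_one) simp
  then have "ln m - ln x \<le> m / x - 1" using x \<open>0 < m\<close> by (simp add: ln_div)
  then have "x * (ln m - ln x) \<le> x * (m / x - 1)" using x by (intro mult_left_mono) auto
  then show ?thesis using x by (simp add: algebra_simps)
qed (use assms in simp)

lemma xlnx_upper: fixes x m :: real assumes "0 \<le> x" "0 < m" shows "x * ln x \<le> x * ln m - x + x\<^sup>2 / m"
proof (cases "x = 0")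
  case False
  then have x: "0 < x" using False assms by (simp add: order_le_less)
  have "ln (x / m) \<le> x / m - 1" using x \<open>0 < m\<close> by (intro ln_le_minus_one) simp
  then have "ln x - ln m \<le> x / m - 1" using x \<open>0 < m\<close> by (simp add: ln_div)
  then have "x * (ln x - ln m) \<le> x * (x / m - 1)" using x by (intro mult_left_mono) auto
  then show ?thesis using x by (simp add: algebra_simps power2_eq_square)
qed (use assms in simp)

lemma Lbounds:
  assumes q: "0 < q" "q < 1" and n: "n \<ge> 1"
  shows "real n * q * ln (real n * q) \<le> (\<Sum>k\<le>n. w n q k * (real k * ln (real k)))"
    and "(\<Sum>k\<le>n. w n q k * (real k * ln (real k))) \<le> real n * q * ln (real n * q) + (1 - q)"
proof -
  define m where "m = real n * q"
  have m: "0 < m" using q n by (simp add: m_def)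
  have "(\<Sum>k\<le>n. w n q k * ((- m) + (ln m + 1) * real k + 0 * real k ^ 2)) \<le> (\<Sum>k\<le>n. w n q k * (real k * ln (real k)))"
    using q m apply (intro wsum_mono) apply simp apply simp
    subgoal for k using xlnx_lower[of "real k" m] m by (simp add: algebra_simps) done
  then show "real n * q * ln (real n * q) \<le> (\<Sum>k\<le>n. w n q k * (real k * ln (real k)))"
    unfolding Squad m_def by (simp add: algebra_simps)
  have "(\<Sum>k\<le>n. w n q k * (real k * ln (real k))) \<le> (\<Sum>k\<le>n. w n q k * (0 + (ln m - 1) * real k + (1/m) * real k ^ 2))"
    using q m apply (intro wsum_mono) apply simp apply simp
    subgoal for k using xlnx_upper[of "real k" m] m by (simp add: algebra_simps) done
  also have "\<dots> = m * ln m + (1 - q)"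
    unfolding Squad using m q n by (simp add: m_def field_simps)
  finally show "(\<Sum>k\<le>n. w n q k * (real k * ln (real k))) \<le> real n * q * ln (real n * q) + (1 - q)"
    by (simp add: m_def)
qed

lemma powr_pt:
  fixes t \<beta> :: real
  assumes t: "0 \<le> t" "t \<le> 1" and b: "0 < \<beta>" "\<beta> < 1"
  shows "t + (1 - \<beta>) * t * (1 - t) \<le> t powr \<beta>"
proof (cases "t = 0")
  case False
  have t0: "0 < t" using t False by (simp add: order_le_less)
  have y: "t powr (1 - \<beta>) * 1 powr \<beta> \<le> (1 - \<beta>) * t + \<beta> * 1"
    using b t0 by (intro Youngs_inequality_0) auto
  have den: "0 < (1 - \<beta>) * t + \<beta>" using b t0 by (smt (verit) mult_nonneg_nonneg)
  have "t powr \<beta> = t / t powr (1 - \<beta>)" using t0 by (simp add: powr_diff)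
  also have "\<dots> \<ge> t / ((1 - \<beta>) * t + \<beta>)"
    using y t0 den by (intro divide_left_mono) auto
  finally have A: "t / ((1 - \<beta>) * t + \<beta>) \<le> t powr \<beta>" .
  have "(t + (1 - \<beta>) * t * (1 - t)) * ((1 - \<beta>) * t + \<beta>) \<le> t"
  proof -
    have "(t + (1 - \<beta>) * t * (1 - t)) * ((1 - \<beta>) * t + \<beta>) = t * (1 - ((1-\<beta>) * (1 - t))^2)"
      by (simp add: algebra_simps power2_eq_square)
    also have "\<dots> \<le> t" using t0 by (simp add: mult_left_le)
    finally show ?thesis .
  qed
  then have "t + (1 - \<beta>) * t * (1 - t) \<le> t / ((1 - \<beta>) * t + \<beta>)"
    using den by (simp add: le_divide_eq)
  with A show ?thesis by linarith
qed simp

lemma powr_sum: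
  fixes q \<beta> :: real
  assumes q: "0 < q" "q < 1" and b: "0 < \<beta>" "\<beta> < 1" and n: "n \<ge> 2"
  shows "real n powr \<beta> * (1 + (1 - \<beta>) * (q * (1 - q))) \<le> (\<Sum>k\<le>n. w n q k * (real k powr \<beta> + real (n - k) powr \<beta>))"
proof -
  define N where "N = real n"
  define P where "P = N powr \<beta>"
  define g where "g = 1 - \<beta>"
  have N: "N \<ge> 2" using n by (simp add: N_def)
  have P: "P > 0" using N by (simp add: P_def)
  have pt: "P + (P * 2 * g / N) * real k + (- P * 2 * g / N^2) * real k ^ 2 \<le> real k powr \<beta> + real (n - k) powr \<beta>" if k: "k \<le> n" for k
  proof -
    define t where "t = real k / N"
    have t: "0 \<le> t" "t \<le> 1" using k N by (auto simp: t_def N_def field_simps)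
    have 1: "real k powr \<beta> = P * t powr \<beta>" using N by (simp add: t_def P_def powr_divide)
    have "real (n - k) = N * (1 - t)" using k N by (simp add: t_def N_def of_nat_diff field_simps)
    then have 2: "real (n - k) powr \<beta> = P * (1 - t) powr \<beta>" using N t
      by (simp add: P_def powr_mult)
    have a: "t + g * t * (1 - t) \<le> t powr \<beta>" using powr_pt[OF t b] by (simp add: g_def)
    have b': "(1 - t) + g * (1 - t) * (1 - (1 - t)) \<le> (1 - t) powr \<beta>" using powr_pt[of "1 - t", OF _ _ b] t by (simp add: g_def)
    have "P * (1 + 2 * g * t * (1 - t)) \<le> P * (t powr \<beta>) + P * ((1 - t) powr \<beta>)"
    proof -
      have "g * (1 - t) * (1 - (1 - t)) = g * t * (1 - t)" by (simp add: algebra_simps)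
      then have s: "1 + 2 * g * t * (1 - t) \<le> t powr \<beta> + (1 - t) powr \<beta>" using a b' by linarith
      show ?thesis using mult_left_mono[OF s, of P] P by (simp add: distrib_left)
    qed
    moreover have "P * (1 + 2 * g * t * (1 - t)) = P + (P * 2 * g / N) * real k + (- P * 2 * g / N^2) * real k ^ 2"
      using N by (simp add: t_def field_simps power2_eq_square)
    ultimately show ?thesis using 1 2 by simp
  qed
  have "(\<Sum>k\<le>n. w n q k * (P + (P * 2 * g / N) * real k + (- P * 2 * g / N^2) * real k ^ 2)) \<le> (\<Sum>k\<le>n. w n q k * (real k powr \<beta> + real (n - k) powr \<beta>))"
    using q apply (intro wsum_mono) apply simp apply simp by (rule pt)
  moreover have "(\<Sum>k\<le>n. w n q k * (P + (P * 2 * g / N) * real k + (- P * 2 * g / N^2) * real k ^ 2)) = P * (1 + g * (q * (1 - q)) * (2 * (N - 1) / N))"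
  proof -
    have "(\<Sum>k\<le>n. w n q k * (P + (P * 2 * g / N) * real k + (- P * 2 * g / N^2) * real k ^ 2))
        = P + (P * 2 * g / N) * (N * q) + (- P * 2 * g / N^2) * (N * q * ((N - 1) * q + 1))"
      unfolding N_def by (rule Squad)
    also have "\<dots> = P + 2 * P * g * q - 2 * P * g * q * ((N - 1) * q + 1) / N"
      using N by (simp add: power2_eq_square)
    also have "\<dots> = P * (1 + g * (q * (1 - q)) * (2 * (N - 1) / N))"
      using N by (simp add: field_simps)
    finally show ?thesis .
  qed
  moreover have "P * (1 + g * (q * (1 - q))) \<le> P * (1 + g * (q * (1 - q)) * (2 * (N - 1) / N))"
  proof -
    have "1 \<le> 2 * (N - 1) / N" using N by (simp add: field_simps)
    moreover have "0 \<le> g * (q * (1 - q))" using q b by (simp add: g_def)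
    ultimately have "g * (q * (1 - q)) * 1 \<le> g * (q * (1 - q)) * (2 * (N - 1) / N)"
      by (intro mult_left_mono) auto
    then show ?thesis using P by (intro mult_left_mono) auto
  qed
  ultimately show ?thesis unfolding P_def g_def N_def by linarith
qed

lemma sum_delta_at:
  fixes g :: "nat \<Rightarrow> real"
  assumes "a \<le> n"
  shows "(\<Sum>k\<le>n. g k * (if k = a then c else 0)) = g a * c"
proof -
  have "(\<Sum>k\<le>n. g k * (if k = a then c else 0)) = (\<Sum>k\<le>n. (if k = a then g a * c else 0))"
    by (rule sum.cong) auto
  then show ?thesis using assms by (simp add: sum.delta)
qed

lemma wsum_abs:
  assumes "0 \<le> q" "q \<le> 1"
  shows "\<bar>\<Sum>k\<le>n. w n q k * h k\<bar> \<le> (\<Sum>k\<le>n. w n q k * \<bar>h k\<bar>)"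
proof -
  have "\<bar>\<Sum>k\<le>n. w n q k * h k\<bar> \<le> (\<Sum>k\<le>n. \<bar>w n q k * h k\<bar>)" by (rule sum_abs)
  also have "\<dots> = (\<Sum>k\<le>n. w n q k * \<bar>h k\<bar>)" using assms by (simp add: abs_mult w_nonneg)
  finally show ?thesis .
qed

lemma lin_bound:
  fixes f e :: "nat \<Rightarrow> nat \<Rightarrow> real" and q :: "nat \<Rightarrow> real" and \<beta> M :: real and N0 :: nat
  assumes q: "\<And>i. i \<in> {0,1} \<Longrightarrow> 0 < q i \<and> q i < 1"
    and rec: "\<And>i n. i \<in> {0,1} \<Longrightarrow> n \<ge> 1 \<Longrightarrow> f i n = (\<Sum>k\<le>n. w n (q i) k * (f 0 k + f 1 (n - k))) + e i n"
    and eb: "\<And>i n. i \<in> {0,1} \<Longrightarrow> n \<ge> N0 \<Longrightarrow> \<bar>e i n\<bar> \<le> M * real n powr \<beta>"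
    and b: "0 < \<beta>" "\<beta> < 1" and M: "M \<ge> 0"
  shows "\<exists>C. \<forall>i\<in>{0,1}. \<forall>n\<ge>1. \<bar>f i n\<bar> \<le> C * real n"
proof -
  define E where "E = max \<bar>f 0 0\<bar> \<bar>f 1 0\<bar>"
  define \<rho> where "\<rho> = min (q 0 * (1 - q 0)) (q 1 * (1 - q 1))"
  define \<gamma> where "\<gamma> = 1 - \<beta>"
  define D where "D = (M + E) / (\<gamma> * \<rho>)"
  define N where "N = max N0 2"
  define F where "F = (\<Sum>n<N. \<bar>f 0 n\<bar> + \<bar>f 1 n\<bar>)"
  define C where "C = F + D"
  define B where "B n = C * real n - D * real n powr \<beta> + E" for n
  have E0: "E \<ge> 0" by (simp add: E_def)
  have \<rho>: "\<rho> > 0" using q[of 0] q[of 1] by (simp add: \<rho>_def)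
  have \<gamma>: "\<gamma> > 0" using b by (simp add: \<gamma>_def)
  have D0: "D \<ge> 0" using M E0 \<rho> \<gamma> by (simp add: D_def)
  have Dgr: "D * \<gamma> * \<rho> = M + E" using \<rho> \<gamma> by (simp add: D_def)
  have F0: "F \<ge> 0" by (simp add: F_def sum_nonneg)
  have claim: "\<forall>i\<in>{0,1}. \<bar>f i n\<bar> \<le> B n" for n
  proof (induction n rule: less_induct)
    case (less n)
    show ?case
    proof (cases "n = 0")
      case True
      then show ?thesis by (auto simp: B_def E_def)
    next
      case n0: False
      show ?thesis
      proof (cases "n < N")
        case True
        have "\<bar>f i n\<bar> \<le> F" if "i \<in> {0,1}" for i
        proof -
          have "\<bar>f i n\<bar> \<le> \<bar>f 0 n\<bar> + \<bar>f 1 n\<bar>" using that by auto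
          also have "\<dots> \<le> F" unfolding F_def
            using True by (intro member_le_sum[of n "{..<N}" "\<lambda>n. \<bar>f 0 n\<bar> + \<bar>f 1 n\<bar>"]) auto
          finally show ?thesis .
        qed
        moreover have "F \<le> B n"
        proof -
          have n1: "real n \<ge> 1" using n0 by simp
          have "real n powr \<beta> \<le> real n powr 1" using n1 b by (intro powr_mono) auto
          then have "D * real n powr \<beta> \<le> D * real n" using D0 n1 by (simp add: mult_left_mono)
          moreover have "F \<le> F * real n" using F0 n1 by (simp add: mult_le_cancel_left1)
          ultimately show ?thesis using E0 by (simp add: B_def C_def algebra_simps)
        qed
        ultimately show ?thesis by force
      next
        case False
        then have nN: "n \<ge> N" by simp
        then have n2: "n \<ge> 2" and nN0: "n \<ge> N0" by (auto simp: N_def)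
        define X where "X = max \<bar>f 0 n\<bar> \<bar>f 1 n\<bar>"
        have key: "\<bar>f i n\<bar> \<le> B n + (w n (q i) 0 + w n (q i) n) * (X - B n)" if i: "i \<in> {0,1}" for i
        proof -
          define Q where "Q = q i"
          have Q: "0 < Q" "Q < 1" using q[OF i] by (auto simp: Q_def)
          have "\<bar>f i n\<bar> \<le> \<bar>\<Sum>k\<le>n. w n Q k * (f 0 k + f 1 (n - k))\<bar> + \<bar>e i n\<bar>"
            using rec[OF i, of n] n2 by (simp add: Q_def)
          also have "\<dots> \<le> (\<Sum>k\<le>n. w n Q k * \<bar>f 0 k + f 1 (n - k)\<bar>) + M * real n powr \<beta>"
            using wsum_abs[of Q n] Q eb[OF i nN0] by (intro add_mono) auto
          also have "(\<Sum>k\<le>n. w n Q k * \<bar>f 0 k + f 1 (n - k)\<bar>) \<le>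
              (\<Sum>k\<le>n. w n Q k * ((B k + B (n - k)) + ((if k = n then X - B n else 0) + (if k = 0 then X - B n else 0))))"
          proof (rule wsum_mono)
            fix k assume k: "k \<le> n"
            have A: "\<bar>f 0 k\<bar> \<le> B k + (if k = n then X - B n else 0)"
            proof (cases "k = n")
              case True then show ?thesis by (simp add: X_def)
            next
              case False then show ?thesis using less.IH[of k] k by auto
            qed
            have A2: "\<bar>f 1 (n - k)\<bar> \<le> B (n - k) + (if k = 0 then X - B n else 0)"
            proof (cases "k = 0")
              case True then show ?thesis by (simp add: X_def)
            next
              case False then show ?thesis using less.IH[of "n - k"] k n0 by auto
            qed
            show "\<bar>f 0 k + f 1 (n - k)\<bar> \<le> B k + B (n - k) + ((if k = n then X - B n else 0) + (if k = 0 then X - B n else 0))"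
              using A A2 by linarith
          qed (use Q in auto)
          also have "\<dots> = (\<Sum>k\<le>n. w n Q k * (B k + B (n - k))) + (w n Q n * (X - B n) + w n Q 0 * (X - B n))"
            by (simp add: distrib_left sum.distrib sum_delta_at)
          finally have 1: "\<bar>f i n\<bar> \<le> (\<Sum>k\<le>n. w n Q k * (B k + B (n - k))) + M * real n powr \<beta> + (w n Q 0 + w n Q n) * (X - B n)"
            by (simp add: algebra_simps)
          have Bsum: "(\<Sum>k\<le>n. w n Q k * (B k + B (n - k))) = C * real n + 2 * E - D * (\<Sum>k\<le>n. w n Q k * (real k powr \<beta> + real (n - k) powr \<beta>))"
          proof -
            have "(\<Sum>k\<le>n. w n Q k * (B k + B (n - k))) = (\<Sum>k\<le>n. w n Q k * (C * real n + 2 * E) - D * (w n Q k * (real k powr \<beta> + real (n - k) powr \<beta>)))"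
              by (rule sum.cong) (auto simp: B_def of_nat_diff algebra_simps)
            also have "\<dots> = (C * real n + 2 * E) * (\<Sum>k\<le>n. w n Q k) - D * (\<Sum>k\<le>n. w n Q k * (real k powr \<beta> + real (n - k) powr \<beta>))"
              by (simp add: sum_subtractf sum_distrib_left sum_distrib_right mult_ac)
            finally show ?thesis by (simp add: S0)
          qed
          have ps: "real n powr \<beta> * (1 + \<gamma> * (Q * (1 - Q))) \<le> (\<Sum>k\<le>n. w n Q k * (real k powr \<beta> + real (n - k) powr \<beta>))"
            using powr_sum[OF Q b n2] by (simp add: \<gamma>_def)
          have rq: "\<rho> \<le> Q * (1 - Q)" using i by (auto simp: \<rho>_def Q_def)
          have np: "real n powr \<beta> \<ge> 1" using n2 b by (intro ge_one_powr_ge_zero) auto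
          have "M * real n powr \<beta> + E \<le> (M + E) * real n powr \<beta>" using np E0 mult_left_mono[OF np E0] by (simp add: algebra_simps)
          also have "\<dots> = D * \<gamma> * \<rho> * real n powr \<beta>" by (simp add: Dgr)
          also have "\<dots> \<le> D * \<gamma> * (Q * (1 - Q)) * real n powr \<beta>"
            using rq D0 \<gamma> np by (intro mult_right_mono mult_left_mono) auto
          finally have 2: "M * real n powr \<beta> + E \<le> D * \<gamma> * (Q * (1 - Q)) * real n powr \<beta>" .
          have 3: "D * (real n powr \<beta> * (1 + \<gamma> * (Q * (1 - Q)))) \<le> D * (\<Sum>k\<le>n. w n Q k * (real k powr \<beta> + real (n - k) powr \<beta>))"
            using ps D0 by (rule mult_left_mono)
          have "(\<Sum>k\<le>n. w n Q k * (B k + B (n - k))) + M * real n powr \<beta> \<le> B n"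
          proof -
            have eq: "D * (real n powr \<beta> * (1 + \<gamma> * (Q * (1 - Q)))) = D * real n powr \<beta> + D * \<gamma> * (Q * (1 - Q)) * real n powr \<beta>"
              by (simp add: algebra_simps)
            have Bn: "B n = C * real n - D * real n powr \<beta> + E" by (simp add: B_def)
            show ?thesis using 2 3 eq Bn Bsum by linarith
          qed
          with 1 show ?thesis by (simp add: Q_def)
        qed
        have s1: "w n (q i) 0 + w n (q i) n < 1" if i: "i \<in> {0,1}" for i
        proof -
          have Q: "0 < q i" "q i < 1" using q[OF i] by auto
          have "q i ^ n < q i ^ 1" using Q n2 by (intro power_strict_decreasing) auto
          moreover have "(1 - q i) ^ n < (1 - q i) ^ 1" using Q n2 by (intro power_strict_decreasing) auto
          ultimately show ?thesis by (simp add: w_def)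
        qed
        have s0: "0 \<le> w n (q i) 0 + w n (q i) n" if i: "i \<in> {0,1}" for i
          using q[OF i] by (simp add: w_nonneg add_nonneg_nonneg)
        have XB: "X \<le> B n"
        proof -
          obtain i where i: "i \<in> {0,1}" "\<bar>f i n\<bar> = X"
          proof (cases "\<bar>f 0 n\<bar> \<le> \<bar>f 1 n\<bar>")
            case True then show ?thesis using that[of 1] by (simp add: X_def)
          next
            case False then show ?thesis using that[of 0] by (simp add: X_def)
          qed
          define s where "s = w n (q i) 0 + w n (q i) n"
          have "X \<le> B n + s * (X - B n)" using key[OF i(1)] i(2) by (simp add: s_def)
          then have "(1 - s) * (X - B n) \<le> 0" by (simp add: algebra_simps)
          moreover have "1 - s > 0" using s1[OF i(1)] by (simp add: s_def)
          ultimately have "X - B n \<le> 0" by (simp add: mult_le_0_iff)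
          then show ?thesis by simp
        qed
        then show ?thesis by (auto simp: X_def)
      qed
    qed
  qed
  have "\<forall>i::nat\<in>{0,1}. \<forall>n\<ge>1. \<bar>f i n\<bar> \<le> (C + E) * real n"
  proof (intro ballI allI impI)
    fix i :: nat and n :: nat assume i: "i \<in> {0,1}" and n: "(n::nat) \<ge> 1"
    have "\<bar>f i n\<bar> \<le> B n" using claim i by blast
    also have "\<dots> \<le> C * real n + E" using D0 by (simp add: B_def)
    also have "\<dots> \<le> (C + E) * real n" using E0 n by (simp add: algebra_simps mult_le_cancel_left1)
    finally show "\<bar>f i n\<bar> \<le> (C + E) * real n" .
  qed
  then show ?thesis by blast
qed

lemma exp_w: "0 \<le> q \<Longrightarrow> q \<le> 1 \<Longrightarrow> measure_pmf.expectation (binomial_pmf n q) h = (\<Sum>k\<le>n. w n q k * h k)"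
  by (simp add: expectation_binomial_pmf' w_def)

theorem lemma4p2:
  fixes p :: "nat \<Rightarrow> nat \<Rightarrow> real"
    and a eps :: "nat \<Rightarrow> nat \<Rightarrow> real"
    and c :: "nat \<Rightarrow> real"
    and \<alpha> :: real
  assumes p_range: "\<And>i j. i \<in> {0,1} \<Longrightarrow> j \<in> {0,1} \<Longrightarrow> 0 < p i j \<and> p i j < 1"
    and p_stoch: "\<And>i. i \<in> {0,1} \<Longrightarrow> p i 0 + p i 1 = 1"
    and p_not_half: "\<exists>i\<in>{0,1}. \<exists>j\<in>{0,1}. p i j \<noteq> 1/2"
    and rec: "\<And>i n. i \<in> {0,1} \<Longrightarrow> n \<ge> 1 \<Longrightarrow>
        a i n = measure_pmf.expectation (binomial_pmf n (p i 0)) (\<lambda>k. a 0 k)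
              + measure_pmf.expectation (binomial_pmf n (p i 0)) (\<lambda>k. a 1 (n - k))
              + eps i n"
    and alpha_lt: "\<alpha> < 1"
    and eps_asymp: "\<And>i. i \<in> {0,1} \<Longrightarrow>
        (\<lambda>n. eps i n - c i * real n) \<in> O(\<lambda>n. real n powr \<alpha>)"
  shows "\<forall>i\<in>{0,1}. (\<lambda>n. a i n - (stat_pi p 0 * c 0 + stat_pi p 1 * c 1) / chain_entropy p
            * real n * ln (real n)) \<in> O(\<lambda>n. real n)"
proof -
  define q where "q i = p i 0" for i
  have q: "0 < q i \<and> q i < 1" if "i \<in> {0,1}" for i using p_range[OF that, of 0] by (simp add: q_def)
  have p1: "p i 1 = 1 - q i" if "i \<in> {0,1}" for i using p_stoch[OF that] by (simp add: q_def)
  define Hr where "Hr i = - (q i * ln (q i) + (1 - q i) * ln (1 - q i))" for i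
  have Hr: "row_entropy p i = Hr i" if "i \<in> {0,1}" for i
    using p1[OF that] by (simp add: row_entropy_def Hr_def q_def)
  have Hrpos: "Hr i > 0" if i: "i \<in> {0,1}" for i
  proof -
    have "ln (q i) < 0" "ln (1 - q i) < 0" using q[OF i] by auto
    then have "q i * ln (q i) < 0" "(1 - q i) * ln (1 - q i) < 0" using q[OF i]
      by (auto simp: mult_pos_neg)
    then show ?thesis by (simp add: Hr_def)
  qed
  define \<pi>0 where "\<pi>0 = stat_pi p 0"
  define \<pi>1 where "\<pi>1 = stat_pi p 1"
  have p01: "p 0 1 > 0" and p10: "p 1 0 > 0" using p_range by auto
  have \<pi>0: "\<pi>0 = p 1 0 / (p 0 1 + p 1 0)" and \<pi>1: "\<pi>1 = p 0 1 / (p 0 1 + p 1 0)"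
    by (simp_all add: \<pi>0_def \<pi>1_def stat_pi_def)
  have \<pi>pos: "\<pi>0 > 0" "\<pi>1 > 0" using p01 p10 by (simp_all add: \<pi>0 \<pi>1)
  define H where "H = chain_entropy p"
  have H: "H = \<pi>0 * Hr 0 + \<pi>1 * Hr 1" by (simp add: H_def chain_entropy_def \<pi>0_def \<pi>1_def Hr)
  have Hpos: "H > 0" using \<pi>pos Hrpos[of 0] Hrpos[of 1] by (simp add: H add_pos_pos)
  define K where "K = (\<pi>0 * c 0 + \<pi>1 * c 1) / H"
  define d where "d i = c i - K * Hr i" for i
  have KH: "K * H = \<pi>0 * c 0 + \<pi>1 * c 1" using Hpos by (simp add: K_def)
  have "\<pi>0 * d 0 + \<pi>1 * d 1 = (\<pi>0 * c 0 + \<pi>1 * c 1) - K * (\<pi>0 * Hr 0 + \<pi>1 * Hr 1)"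
    by (simp add: d_def algebra_simps)
  then have dsum: "\<pi>0 * d 0 + \<pi>1 * d 1 = 0" using KH H by simp
  have "\<pi>0 * d 0 + \<pi>1 * d 1 = (p 1 0 * d 0 + p 0 1 * d 1) / (p 0 1 + p 1 0)"
    by (simp add: \<pi>0 \<pi>1 add_divide_distrib)
  then have dsum': "p 1 0 * d 0 + p 0 1 * d 1 = 0" using p01 p10 dsum by simp
  define g where "g i = (if i = 0 then d 0 / p 0 1 else 0)" for i :: nat
  have bracket: "c i - K * Hr i + g 0 * q i + g 1 * (1 - q i) - g i = 0" if i: "i \<in> {0,1}" for i
  proof (cases "i = 0")
    case True
    have a: "g 0 * q 0 - g 0 = - (g 0 * p 0 1)" using p1[of 0] by (simp add: right_diff_distrib)
    have b: "g 0 * p 0 1 = d 0" using p01 by (simp add: g_def)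
    show ?thesis using True a b by (simp add: g_def d_def)
  next
    case False
    then have "i = 1" using i by auto
    then show ?thesis using p01 dsum' by (simp add: g_def d_def q_def field_simps)
  qed
  define L where "L n = real n * ln (real n)" for n :: nat
  define f where "f i n = a i n - K * L n - g i * real n" for i n
  define e where "e i n = f i n - (\<Sum>k\<le>n. w n (q i) k * (f 0 k + f 1 (n - k)))" for i n
  define \<beta> where "\<beta> = max \<alpha> (1/2)"
  have \<beta>: "0 < \<beta>" "\<beta> < 1" "\<alpha> \<le> \<beta>" using alpha_lt by (auto simp: \<beta>_def)
  obtain c0 where c0pos: "c0 > 0" and c0: "\<forall>\<^sub>F n in sequentially. norm (eps 0 n - c 0 * real n) \<le> c0 * norm (real n powr \<alpha>)"
    using landau_o.bigE[OF eps_asymp[of 0, OF insertI1]] by blast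
  obtain c1 where c1pos: "c1 > 0" and c1: "\<forall>\<^sub>F n in sequentially. norm (eps 1 n - c 1 * real n) \<le> c1 * norm (real n powr \<alpha>)"
    using landau_o.bigE[OF eps_asymp[of 1]] by blast
  obtain N0 where N0: "\<And>n. n \<ge> N0 \<Longrightarrow> norm (eps 0 n - c 0 * real n) \<le> c0 * norm (real n powr \<alpha>) \<and> norm (eps 1 n - c 1 * real n) \<le> c1 * norm (real n powr \<alpha>)"
    using eventually_conj[OF c0 c1] unfolding eventually_sequentially by blast
  define M where "M = max c0 c1 + 2 * \<bar>K\<bar>"
  have epsb: "\<bar>eps i n - c i * real n\<bar> \<le> max c0 c1 * real n powr \<alpha>" if i: "i \<in> {0,1}" and n: "n \<ge> N0" for i n
  proof -
    have pa: "0 \<le> real n powr \<alpha>" by simp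
    have "max c0 c1 * real n powr \<alpha> \<ge> c0 * real n powr \<alpha>" "max c0 c1 * real n powr \<alpha> \<ge> c1 * real n powr \<alpha>"
      using pa by (auto intro: mult_right_mono)
    then show ?thesis using N0[OF n] i by auto
  qed
  have eb: "\<bar>e i n\<bar> \<le> M * real n powr \<beta>" if i: "i \<in> {0,1}" and n: "n \<ge> max N0 1" for i n
  proof -
    have n1: "n \<ge> 1" and nN0: "n \<ge> N0" using n by auto
    define Q where "Q = q i"
    have Q: "0 < Q" "Q < 1" using q[OF i] by (auto simp: Q_def)
    have Q01: "0 \<le> Q" "Q \<le> 1" "0 \<le> 1 - Q" "1 - Q \<le> 1" using Q by auto
    have rec': "a i n = (\<Sum>k\<le>n. w n Q k * a 0 k) + (\<Sum>k\<le>n. w n Q k * a 1 (n - k)) + eps i n"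
      using rec[OF i n1] Q01 by (simp add: exp_w Q_def q_def)
    have S: "(\<Sum>k\<le>n. w n Q k * (f 0 k + f 1 (n - k))) =
        ((\<Sum>k\<le>n. w n Q k * a 0 k) + (\<Sum>k\<le>n. w n Q k * a 1 (n - k)))
        - K * (\<Sum>k\<le>n. w n Q k * L k) - K * (\<Sum>k\<le>n. w n Q k * L (n - k))
        - g 0 * (\<Sum>k\<le>n. w n Q k * real k) - g 1 * (\<Sum>k\<le>n. w n Q k * real (n - k))"
      unfolding f_def by (simp add: algebra_simps sum.distrib sum_subtractf sum_distrib_left)
    have S1': "(\<Sum>k\<le>n. w n Q k * real (n - k)) = real n * (1 - Q)"
      using w_rev[of n Q real] S1[of n "1 - Q"] by simp
    have S2': "(\<Sum>k\<le>n. w n Q k * L (n - k)) = (\<Sum>k\<le>n. w n (1 - Q) k * (real k * ln (real k)))"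
      using w_rev[of n Q L] by (simp add: L_def)
    have LB1: "real n * Q * ln (real n * Q) \<le> (\<Sum>k\<le>n. w n Q k * L k)"
              "(\<Sum>k\<le>n. w n Q k * L k) \<le> real n * Q * ln (real n * Q) + (1 - Q)"
      using Lbounds[OF Q n1] by (simp_all add: L_def)
    have LB2: "real n * (1 - Q) * ln (real n * (1 - Q)) \<le> (\<Sum>k\<le>n. w n Q k * L (n - k))"
              "(\<Sum>k\<le>n. w n Q k * L (n - k)) \<le> real n * (1 - Q) * ln (real n * (1 - Q)) + (1 - (1 - Q))"
      using Lbounds[of "1 - Q" n] Q n1 S2' by simp_all
    have ent: "real n * Q * ln (real n * Q) + real n * (1 - Q) * ln (real n * (1 - Q)) = L n - real n * Hr i"
    proof -
      have l1: "ln (real n * Q) = ln (real n) + ln Q" using Q n1 by (intro ln_mult_pos) auto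
      have l2: "ln (real n * (1 - Q)) = ln (real n) + ln (1 - Q)" using Q n1 by (intro ln_mult_pos) auto
      show ?thesis unfolding l1 l2 by (simp add: L_def Hr_def Q_def[symmetric] algebra_simps)
    qed
    define r1 where "r1 = (\<Sum>k\<le>n. w n Q k * L k) - real n * Q * ln (real n * Q)"
    define r2 where "r2 = (\<Sum>k\<le>n. w n Q k * L (n - k)) - real n * (1 - Q) * ln (real n * (1 - Q))"
    have r: "\<bar>r1\<bar> \<le> 1" "\<bar>r2\<bar> \<le> 1" using LB1 LB2 Q by (auto simp: r1_def r2_def)
    have "e i n = (eps i n - c i * real n) + K * r1 + K * r2 + real n * (c i - K * Hr i + g 0 * Q + g 1 * (1 - Q) - g i)"
    proof -
      have entK: "K * (real n * Q * ln (real n * Q) + real n * (1 - Q) * ln (real n * (1 - Q))) = K * (L n - real n * Hr i)"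
        using ent by simp
      show ?thesis unfolding e_def Q_def[symmetric] S S1 S1' using rec' entK
        by (simp add: r1_def r2_def f_def algebra_simps)
    qed
    also have "real n * (c i - K * Hr i + g 0 * Q + g 1 * (1 - Q) - g i) = 0"
      using bracket[OF i] by (simp add: Q_def)
    finally have eq: "e i n = (eps i n - c i * real n) + K * r1 + K * r2" by simp
    have "\<bar>e i n\<bar> \<le> max c0 c1 * real n powr \<alpha> + \<bar>K\<bar> + \<bar>K\<bar>"
    proof -
      have "\<bar>K * r1\<bar> \<le> \<bar>K\<bar>" "\<bar>K * r2\<bar> \<le> \<bar>K\<bar>" using r by (auto simp: abs_mult intro: mult_left_le)
      then show ?thesis using eq epsb[OF i nN0] by linarith
    qed
    also have "\<dots> \<le> M * real n powr \<beta>"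
    proof -
      have np: "1 \<le> real n powr \<beta>" using n1 \<beta> by (intro ge_one_powr_ge_zero) auto
      have "real n powr \<alpha> \<le> real n powr \<beta>" using n1 \<beta> by (intro powr_mono) auto
      moreover have "max c0 c1 \<ge> 0" using c0pos by simp
      ultimately have "max c0 c1 * real n powr \<alpha> \<le> max c0 c1 * real n powr \<beta>" by (intro mult_left_mono)
      moreover have "2 * \<bar>K\<bar> \<le> 2 * \<bar>K\<bar> * real n powr \<beta>" using np by (simp add: mult_le_cancel_left1)
      ultimately show ?thesis by (simp add: M_def algebra_simps)
    qed
    finally show ?thesis .
  qed
  have M0: "M \<ge> 0" using c0pos by (simp add: M_def)
  have recf: "f i n = (\<Sum>k\<le>n. w n (q i) k * (f 0 k + f 1 (n - k))) + e i n" for i n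
    by (simp add: e_def)
  obtain C where C: "\<forall>i\<in>{0,1}. \<forall>n\<ge>1. \<bar>f i n\<bar> \<le> C * real n"
    using lin_bound[of q f e "max N0 1" M \<beta>, OF q recf eb \<beta>(1) \<beta>(2) M0] by blast
  have Keq: "(stat_pi p 0 * c 0 + stat_pi p 1 * c 1) / chain_entropy p = K"
    by (simp add: K_def \<pi>0_def \<pi>1_def H_def)
  show ?thesis
  proof
    fix i :: nat assume i: "i \<in> {0,1}"
    show "(\<lambda>n. a i n - (stat_pi p 0 * c 0 + stat_pi p 1 * c 1) / chain_entropy p
            * real n * ln (real n)) \<in> O(\<lambda>n. real n)"
      unfolding Keq
    proof (rule bigoI[where c = "C + \<bar>g i\<bar>"])
      show "\<forall>\<^sub>F n in at_top. norm (a i n - K * real n * ln (real n)) \<le> (C + \<bar>g i\<bar>) * norm (real n)"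
        unfolding eventually_sequentially
      proof (intro exI allI impI)
        fix n :: nat assume n: "n \<ge> 1"
        have fb: "\<bar>f i n\<bar> \<le> C * real n" using C i n by blast
        have "a i n - K * real n * ln (real n) = f i n + g i * real n" by (simp add: f_def L_def)
        then have "\<bar>a i n - K * real n * ln (real n)\<bar> \<le> \<bar>f i n\<bar> + \<bar>g i\<bar> * real n"
          using abs_triangle_ineq[of "f i n" "g i * real n"] by (simp add: abs_mult)
        also have "\<dots> \<le> (C + \<bar>g i\<bar>) * real n" using fb by (simp add: algebra_simps)
        finally show "norm (a i n - K * real n * ln (real n)) \<le> (C + \<bar>g i\<bar>) * norm (real n)" by simp
      qed
    qed
  qed
qed

end
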